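(* Assume the user paths are pairwise edge-disjoint. Let $E^*$ be an $s$-$t$ path maximizing $\Lambda(\cdot,P)$ over all directed $s$-$t$ paths, and let $d$ be its number of edges. If the initial recursion depth satisfies $I\ge\lceil\log d\rceil$, then the Recursive Greedy algorithm (with $F=\Lambda(\cdot,P)$) returns an $s$-$t$ path $E_{\mathbf{f}}$ with $\Lambda(E_{\mathbf{f}},P)\ge\frac{1}{\lceil\log d\rceil+1}\Lambda(E^*,P)$. (Logarithms are base 2.)
   Context: $G=(V,E)$ is a simple directed acyclic graph with capacities $C\in\mathbb{R}_{\ge0}^E$, $s,t\in V$ joined by a directed path, and budget $0<\gamma\le\min_eC(e)$. User paths $P=\{p_1,\dots,p_k\}$ are directed paths (edge sets) with initial values $\lambda_i\ge0$, $\sum_{i:e\in p_i}\lambda_i\le C(e)$. For $A\subseteq E$, $T(A,P)$ is the optimal value of: maximize $\sum_i\tilde\lambda_i$ s.t. $\sum_{i:e\in p_i}\tilde\lambda_i\le C(e)-\gamma\mathbf{1}_{\{e\in A\}}$ for all $e$, $0\le\tilde\lambda_i\le\lambda_i$; $\Lambda(A,P)=\sum_i\lambda_i-T(A,P)$. (For an $s$-$t$ path $E'$, $\Lambda(E',P)$ equals the throughput reduction caused by injecting flow $\gamma$ along $E'$.) Recursive Greedy algorithm for a set function $F:2^E\to\mathbb{R}$, with $F_X(A)=F(A\cup X)-F(X)$: the recursive procedure $RG(u_1,u_2,X,i)$ ($u_1,u_2\in V$, $X\subseteq E$, integer $i\ge0$) lets $S$ be a shortest (fewest edges) directed $u_1$-$u_2$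 path; if none exists it returns "infeasible"; if $i=0$ it returns $S$; otherwise it sets $best:=S$, $r:=F_X(S)$ and, for every $v\in V$, computes $Q_1=RG(u_1,v,X,i-1)$ and then $Q_2=RG(v,u_2,X\cup Q_1,i-1)$ (skipping $v$ if a call is infeasible), and if $F_X(Q_1\cup Q_2)>r$ sets $r:=F_X(Q_1\cup Q_2)$, $best:=Q_1\cup Q_2$; finally it returns $best$. The algorithm outputs $RG(s,t,\emptyset,I)$. *)

theory Defs
  imports Complex_Main
begin

type_synonym 'v edge = "'v \<times> 'v"

definition is_vpath :: "'v edge set \<Rightarrow> 'v \<Rightarrow> 'v \<Rightarrow> 'v list \<Rightarrow> bool" where
  "is_vpath E u v ps \<longleftrightarrow> ps \<noteq> [] \<and> hd ps = u \<and> last ps = v \<and> distinct ps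
      \<and> (\<forall>j. Suc j < length ps \<longrightarrow> (ps ! j, ps ! Suc j) \<in> E)"

definition vpath_edges :: "'v list \<Rightarrow> 'v edge set" where
  "vpath_edges ps = set (zip ps (tl ps))"

definition is_path :: "'v edge set \<Rightarrow> 'v \<Rightarrow> 'v \<Rightarrow> 'v edge set \<Rightarrow> bool" where
  "is_path E u v S \<longleftrightarrow> (\<exists>ps. is_vpath E u v ps \<and> S = vpath_edges ps)"

definition has_path :: "'v edge set \<Rightarrow> 'v \<Rightarrow> 'v \<Rightarrow> bool" where
  "has_path E u v \<longleftrightarrow> (\<exists>S. is_path E u v S)"

definition is_dpath :: "'v edge set \<Rightarrow> 'v edge set \<Rightarrow> bool" where
  "is_dpath E S \<longleftrightarrow> (\<exists>u v. is_path E u v S)"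

definition shortest_path_selector :: "'v edge set \<Rightarrow> ('v \<Rightarrow> 'v \<Rightarrow> 'v edge set) \<Rightarrow> bool" where
  "shortest_path_selector E sp \<longleftrightarrow> (\<forall>u v. has_path E u v \<longrightarrow>
      is_path E u v (sp u v) \<and> (\<forall>S. is_path E u v S \<longrightarrow> card (sp u v) \<le> card S))"

text \<open>Feasible reduced throughputs for the LP defining T(A,P); users indexed by i < k.\<close>
definition feasible_tp ::
  "'v edge set \<Rightarrow> ('v edge \<Rightarrow> real) \<Rightarrow> real \<Rightarrow> nat \<Rightarrow> (nat \<Rightarrow> 'v edge set) \<Rightarrow> (nat \<Rightarrow> real)
     \<Rightarrow> 'v edge set \<Rightarrow> (nat \<Rightarrow> real) \<Rightarrow> bool" where
  "feasible_tp E C \<gamma> k p lam A lt \<longleftrightarrow>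
     (\<forall>e\<in>E. (\<Sum>i\<in>{i. i < k \<and> e \<in> p i}. lt i) \<le> C e - \<gamma> * (if e \<in> A then 1 else 0))
     \<and> (\<forall>i<k. 0 \<le> lt i \<and> lt i \<le> lam i)"

definition T_opt ::
  "'v edge set \<Rightarrow> ('v edge \<Rightarrow> real) \<Rightarrow> real \<Rightarrow> nat \<Rightarrow> (nat \<Rightarrow> 'v edge set) \<Rightarrow> (nat \<Rightarrow> real)
     \<Rightarrow> 'v edge set \<Rightarrow> real" where
  "T_opt E C \<gamma> k p lam A = Sup {(\<Sum>i<k. lt i) | lt. feasible_tp E C \<gamma> k p lam A lt}"

definition Lambda ::
  "'v edge set \<Rightarrow> ('v edge \<Rightarrow> real) \<Rightarrow> real \<Rightarrow> nat \<Rightarrow> (nat \<Rightarrow> 'v edge set) \<Rightarrow> (nat \<Rightarrow> real)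
     \<Rightarrow> 'v edge set \<Rightarrow> real" where
  "Lambda E C \<gamma> k p lam A = (\<Sum>i<k. lam i) - T_opt E C \<gamma> k p lam A"

text \<open>Recursive Greedy RG(u1,u2,X,i) for a set function F, with shortest-path selector sp
  and the vertices of V enumerated in the order vs.  None = "infeasible".\<close>
primrec RG ::
  "nat \<Rightarrow> 'v edge set \<Rightarrow> ('v \<Rightarrow> 'v \<Rightarrow> 'v edge set) \<Rightarrow> 'v list \<Rightarrow> ('v edge set \<Rightarrow> real)
     \<Rightarrow> 'v \<Rightarrow> 'v \<Rightarrow> 'v edge set \<Rightarrow> 'v edge set option" where
  "RG 0 E sp vs F u1 u2 X = (if has_path E u1 u2 then Some (sp u1 u2) else None)"
| "RG (Suc i) E sp vs F u1 u2 X =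
     (if \<not> has_path E u1 u2 then None else
      Some (fst (fold (\<lambda>v (best, r).
          (case RG i E sp vs F u1 v X of
             None \<Rightarrow> (best, r)
           | Some Q1 \<Rightarrow>
              (case RG i E sp vs F v u2 (X \<union> Q1) of
                 None \<Rightarrow> (best, r)
               | Some Q2 \<Rightarrow>
                  (if F ((Q1 \<union> Q2) \<union> X) - F X > r
                   then (Q1 \<union> Q2, F ((Q1 \<union> Q2) \<union> X) - F X) else (best, r)))))
        vs (sp u1 u2, F (sp u1 u2 \<union> X) - F X))))"

end

theory Submission
  imports Defs
begin


lemma ve_Nil[simp]: "vpath_edges [] = {}" by (simp add: vpath_edges_def)
lemma ve_single[simp]: "vpath_edges [x] = {}" by (simp add: vpath_edges_def)
lemma ve_Cons2[simp]: "vpath_edges (x#y#zs) = insert (x,y) (vpath_edges (y#zs))"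
  by (simp add: vpath_edges_def)

lemma ve_append: "xs \<noteq> [] \<Longrightarrow> vpath_edges (xs @ ys) = vpath_edges xs \<union> vpath_edges (last xs # ys)"
proof (induction xs)
  case Nil then show ?case by simp
next
  case (Cons x xs)
  show ?case
  proof (cases xs)
    case Nil then show ?thesis by simp
  next
    case (Cons y zs)
    then show ?thesis using Cons.IH by auto
  qed
qed

lemma ve_finite: "finite (vpath_edges ps)" by (simp add: vpath_edges_def)

lemma edges_cond_iff: "(\<forall>j. Suc j < length ps \<longrightarrow> (ps ! j, ps ! Suc j) \<in> E) \<longleftrightarrow> vpath_edges ps \<subseteq> E"
proof
  assume H: "\<forall>j. Suc j < length ps \<longrightarrow> (ps ! j, ps ! Suc j) \<in> E"
  show "vpath_edges ps \<subseteq> E"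
  proof
    fix x assume "x \<in> vpath_edges ps"
    then obtain n where "ps ! n = fst x" "tl ps ! n = snd x" "n < length ps" "n < length (tl ps)"
      unfolding vpath_edges_def in_set_zip by blast
    then have "x = (ps ! n, ps ! Suc n)" "Suc n < length ps"
      using nth_tl[of n ps] by (auto simp: prod_eq_iff)
    then show "x \<in> E" using H by simp
  qed
next
  assume H: "vpath_edges ps \<subseteq> E"
  show "\<forall>j. Suc j < length ps \<longrightarrow> (ps ! j, ps ! Suc j) \<in> E"
  proof (intro allI impI)
    fix j assume j: "Suc j < length ps"
    have "(ps ! j, ps ! Suc j) \<in> vpath_edges ps"
      unfolding vpath_edges_def in_set_zip using j by (intro exI[of _ j]) (auto simp: nth_tl)
    then show "(ps ! j, ps ! Suc j) \<in> E" using H by auto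
  qed
qed

lemma vpath_alt: "is_vpath E u v ps \<longleftrightarrow> ps \<noteq> [] \<and> hd ps = u \<and> last ps = v \<and> distinct ps \<and> vpath_edges ps \<subseteq> E"
  unfolding is_vpath_def edges_cond_iff by blast

lemma reach_last: "vpath_edges ps \<subseteq> E \<Longrightarrow> w \<in> set ps \<Longrightarrow> (w, last ps) \<in> E\<^sup>*"
proof (induction ps arbitrary: w)
  case Nil then show ?case by simp
next
  case (Cons x xs)
  show ?case
  proof (cases xs)
    case Nil then show ?thesis using Cons by simp
  next
    case (Cons y zs)
    with Cons.prems Cons.IH show ?thesis
      by (auto intro: converse_rtrancl_into_rtrancl)
  qed
qed

lemma reach_tl: "vpath_edges ps \<subseteq> E \<Longrightarrow> w \<in> set (tl ps) \<Longrightarrow> (hd ps, w) \<in> E\<^sup>+"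
proof (induction ps)
  case Nil then show ?case by simp
next
  case (Cons x xs)
  show ?case
  proof (cases xs)
    case Nil then show ?thesis using Cons by simp
  next
    case (Cons y zs)
    with Cons.prems Cons.IH show ?thesis
      by (auto intro: trancl_into_trancl2)
  qed
qed

lemma vpath_concat:
  assumes p1: "is_vpath E u v ps1" and p2: "is_vpath E v w ps2" and ac: "acyclic E"
  shows "is_vpath E u w (ps1 @ tl ps2) \<and> vpath_edges (ps1 @ tl ps2) = vpath_edges ps1 \<union> vpath_edges ps2"
proof -
  from p2 obtain ys where ps2: "ps2 = v # ys" unfolding vpath_alt by (cases ps2) auto
  have ne1: "ps1 \<noteq> []" and l1: "last ps1 = v" and h1: "hd ps1 = u" and d1: "distinct ps1"
    and e1: "vpath_edges ps1 \<subseteq> E" using p1 unfolding vpath_alt by auto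
  have d2: "distinct ps2" and e2: "vpath_edges ps2 \<subseteq> E" and l2: "last ps2 = w"
    using p2 unfolding vpath_alt by auto
  have edges: "vpath_edges (ps1 @ tl ps2) = vpath_edges ps1 \<union> vpath_edges ps2"
    using ve_append[OF ne1, of ys] l1 ps2 by simp
  have disj: "set ps1 \<inter> set ys = {}"
  proof (rule ccontr)
    assume "set ps1 \<inter> set ys \<noteq> {}"
    then obtain x where x1: "x \<in> set ps1" and x2: "x \<in> set ys" by blast
    have "(x, v) \<in> E\<^sup>*" using reach_last[OF e1 x1] l1 by simp
    moreover have "(v, x) \<in> E\<^sup>+" using reach_tl[OF e2, of x] x2 ps2 by simp
    ultimately have "(v, v) \<in> E\<^sup>+" by (meson trancl_rtrancl_trancl)
    then show False using ac unfolding acyclic_def by blast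
  qed
  have last: "last (ps1 @ ys) = w"
    using l1 l2 ps2 by (cases "ys = []") auto
  show ?thesis unfolding vpath_alt using edges ne1 h1 d1 d2 disj last e1 e2 ps2 by auto
qed

lemma path_concat:
  assumes "is_path E u v S1" "is_path E v w S2" "acyclic E"
  shows "is_path E u w (S1 \<union> S2)"
  using assms vpath_concat unfolding is_path_def by metis

lemma card_ve: "distinct ps \<Longrightarrow> card (vpath_edges ps) = length ps - 1"
  unfolding vpath_edges_def by (simp add: distinct_card distinct_zipI1)

lemma vpath_split:
  assumes p: "is_vpath E u1 u2 ps" and m: "m < length ps"
  shows "is_vpath E u1 (ps!m) (take (Suc m) ps) \<and> is_vpath E (ps!m) u2 (drop m ps)
     \<and> vpath_edges ps = vpath_edges (take (Suc m) ps) \<union> vpath_edges (drop m ps)"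
proof -
  have ne: "take (Suc m) ps \<noteq> []" using m by (cases ps) auto
  have lt: "last (take (Suc m) ps) = ps ! m" using m by (simp add: take_Suc_conv_app_nth)
  have "ps = take (Suc m) ps @ drop (Suc m) ps" by simp
  then have eq: "vpath_edges ps = vpath_edges (take (Suc m) ps) \<union> vpath_edges (drop m ps)"
    using ve_append[OF ne, of "drop (Suc m) ps"] lt Cons_nth_drop_Suc[OF m] by metis
  have "hd (take (Suc m) ps) = u1" using p m unfolding vpath_alt by (cases ps) auto
  moreover have "hd (drop m ps) = ps ! m" using m by (simp add: hd_drop_conv_nth)
  moreover have "last (drop m ps) = u2" using p m unfolding vpath_alt by simp
  moreover have "drop m ps \<noteq> []" using m by simp
  ultimately show ?thesis using p eq ne lt unfolding vpath_alt by auto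
qed

lemma short_path_unique:
  assumes "is_path E u v S" "card S \<le> 1"
  shows "S = (if u = v then {} else {(u,v)})"
proof -
  obtain ps where p: "is_vpath E u v ps" and S: "S = vpath_edges ps" using assms unfolding is_path_def by blast
  have d: "distinct ps" and ne: "ps \<noteq> []" using p unfolding vpath_alt by auto
  have "length ps \<le> 2" using card_ve[OF d] assms(2) S by simp
  then consider x where "ps = [x]" | x y where "ps = [x,y]" using ne
    by (cases ps; cases "tl ps"; auto)
  then show ?thesis
  proof cases
    case 1 then show ?thesis using p S unfolding vpath_alt by auto
  next
    case 2 then show ?thesis using p S unfolding vpath_alt by auto
  qed
qed



lemma fold_inv0:
  assumes "\<And>v a. P a \<Longrightarrow> P (g v a)" "\<And>v a. snd a \<le> (snd (g v a) :: real)"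
    "\<And>v a. Q v (snd (g v a))" "\<And>v x y. Q v x \<Longrightarrow> x \<le> y \<Longrightarrow> Q v y"
  shows "\<forall>a0. P a0 \<longrightarrow> P (fold g vs a0) \<and> snd a0 \<le> snd (fold g vs a0) \<and> (\<forall>v\<in>set vs. Q v (snd (fold g vs a0)))"
proof (induction vs)
  case Nil then show ?case by simp
next
  case (Cons w ws)
  show ?case
  proof (intro allI impI)
    fix a0 assume Pa: "P a0"
    have Pg: "P (g w a0)" using assms(1) Pa .
    have IH: "P (fold g ws (g w a0)) \<and> snd (g w a0) \<le> snd (fold g ws (g w a0))
       \<and> (\<forall>v\<in>set ws. Q v (snd (fold g ws (g w a0))))" using Cons.IH Pg by blast
    have "snd a0 \<le> snd (g w a0)" by (rule assms(2))
    moreover have "Q w (snd (fold g ws (g w a0)))" using assms(3)[of w a0] assms(4) IH by blast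
    ultimately show "P (fold g (w # ws) a0) \<and> snd a0 \<le> snd (fold g (w # ws) a0) \<and>
       (\<forall>v\<in>set (w # ws). Q v (snd (fold g (w # ws) a0)))" using IH by auto
  qed
qed

lemma fold_inv:
  assumes "\<And>v a. P a \<Longrightarrow> P (g v a)" "\<And>v a. snd a \<le> (snd (g v a) :: real)"
    "\<And>v a. Q v (snd (g v a))" "\<And>v x y. Q v x \<Longrightarrow> x \<le> y \<Longrightarrow> Q v y" "P a0"
  shows "P (fold g vs a0) \<and> snd a0 \<le> snd (fold g vs a0) \<and> (\<forall>v\<in>set vs. Q v (snd (fold g vs a0)))"
proof -
  have H: "\<forall>a0. P a0 \<longrightarrow> P (fold g vs a0) \<and> snd a0 \<le> snd (fold g vs a0) \<and> (\<forall>v\<in>set vs. Q v (snd (fold g vs a0)))"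
    apply (rule fold_inv0)
    using assms(1) apply blast
    using assms(2) apply blast
    using assms(3) apply blast
    using assms(4) apply blast
    done
  then show ?thesis using assms(5) by blast
qed

definition rgstep where
  "rgstep i E sp vs F u1 u2 X = (\<lambda>v (best, r).
          (case RG i E sp vs F u1 v X of
             None \<Rightarrow> (best, r)
           | Some Q1 \<Rightarrow>
              (case RG i E sp vs F v u2 (X \<union> Q1) of
                 None \<Rightarrow> (best, r)
               | Some Q2 \<Rightarrow>
                  (if F ((Q1 \<union> Q2) \<union> X) - F X > r
                   then (Q1 \<union> Q2, F ((Q1 \<union> Q2) \<union> X) - F X) else (best, r)))))"

lemma RG_Suc': "RG (Suc i) E sp vs F u1 u2 X =
     (if \<not> has_path E u1 u2 then None else
      Some (fst (fold (rgstep i E sp vs F u1 u2 X) vs (sp u1 u2, F (sp u1 u2 \<union> X) - F X))))"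
  unfolding rgstep_def by simp

lemma RG_some: "has_path E u1 u2 \<Longrightarrow> RG i E sp vs F u1 u2 X \<noteq> None"
  by (cases i) auto

lemma rgstep_props:
  fixes F :: "'v edge set \<Rightarrow> real"
  assumes IH0: "\<forall>a b Y P. RG i E sp vs F a b Y = Some P \<longrightarrow> is_path E a b P"
    and ac: "acyclic E"
  shows "(snd a = F (fst a \<union> X) - F X \<and> is_path E u1 u2 (fst a)) \<Longrightarrow>
      (snd (rgstep i E sp vs F u1 u2 X v a) = F (fst (rgstep i E sp vs F u1 u2 X v a) \<union> X) - F X
       \<and> is_path E u1 u2 (fst (rgstep i E sp vs F u1 u2 X v a)))"
    and "snd a \<le> snd (rgstep i E sp vs F u1 u2 X v a)"
    and "\<forall>Q1 Q2. RG i E sp vs F u1 v X = Some Q1 \<longrightarrow> RG i E sp vs F v u2 (X \<union> Q1) = Some Q2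
          \<longrightarrow> F ((Q1 \<union> Q2) \<union> X) - F X \<le> snd (rgstep i E sp vs F u1 u2 X v a)"
proof -
  have IH: "\<And>a b Y P. RG i E sp vs F a b Y = Some P \<Longrightarrow> is_path E a b P" using IH0 by blast
  obtain b r where a: "a = (b, r)" by (cases a)
  show "snd a \<le> snd (rgstep i E sp vs F u1 u2 X v a)"
    unfolding a rgstep_def by (auto split: option.split)
  show "\<forall>Q1 Q2. RG i E sp vs F u1 v X = Some Q1 \<longrightarrow> RG i E sp vs F v u2 (X \<union> Q1) = Some Q2
          \<longrightarrow> F ((Q1 \<union> Q2) \<union> X) - F X \<le> snd (rgstep i E sp vs F u1 u2 X v a)"
    unfolding a rgstep_def by (auto split: option.split)
  assume inv: "snd a = F (fst a \<union> X) - F X \<and> is_path E u1 u2 (fst a)"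
  show "snd (rgstep i E sp vs F u1 u2 X v a) = F (fst (rgstep i E sp vs F u1 u2 X v a) \<union> X) - F X
       \<and> is_path E u1 u2 (fst (rgstep i E sp vs F u1 u2 X v a))"
  proof (cases "RG i E sp vs F u1 v X")
    case None then show ?thesis using inv unfolding a rgstep_def by simp
  next
    case (Some Q1)
    note S1 = Some
    show ?thesis
    proof (cases "RG i E sp vs F v u2 (X \<union> Q1)")
      case None then show ?thesis using inv S1 unfolding a rgstep_def by simp
    next
      case (Some Q2)
      have "is_path E u1 u2 (Q1 \<union> Q2)"
        using path_concat[OF IH[OF S1] IH[OF Some] ac] .
      then show ?thesis using inv S1 Some unfolding a rgstep_def by auto
    qed
  qed
qed

lemma RG_path:
  fixes F :: "'v edge set \<Rightarrow> real"
  assumes ac: "acyclic E" and sps: "shortest_path_selector E sp"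
  shows "RG i E sp vs F u1 u2 X = Some P \<Longrightarrow> is_path E u1 u2 P"
proof (induction i arbitrary: u1 u2 X P)
  case 0 then show ?case using sps unfolding shortest_path_selector_def by (auto split: if_splits)
next
  case (Suc i)
  have IH: "\<forall>a b Y P. RG i E sp vs F a b Y = Some P \<longrightarrow> is_path E a b P"
    using Suc.IH by blast
  have hp: "has_path E u1 u2" and P: "P = fst (fold (rgstep i E sp vs F u1 u2 X) vs (sp u1 u2, F (sp u1 u2 \<union> X) - F X))"
    using Suc.prems by (auto simp: RG_Suc' split: if_splits simp del: RG.simps)
  let ?P = "\<lambda>a. snd a = F (fst a \<union> X) - F X \<and> is_path E u1 u2 (fst a)"
  have "?P (fold (rgstep i E sp vs F u1 u2 X) vs (sp u1 u2, F (sp u1 u2 \<union> X) - F X))"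
    apply (rule conjunct1[OF fold_inv[where Q = "\<lambda>_ _. True"]])
    using rgstep_props(1)[OF IH ac] apply blast
    using rgstep_props(2)[OF IH ac] apply blast
    using hp sps unfolding shortest_path_selector_def by auto
  then show ?case using P by simp
qed

lemma RG_best:
  fixes F :: "'v edge set \<Rightarrow> real"
  assumes ac: "acyclic E" and sps: "shortest_path_selector E sp"
    and R: "RG (Suc i) E sp vs F u1 u2 X = Some P"
  shows "F (sp u1 u2 \<union> X) - F X \<le> F (P \<union> X) - F X \<and>
    (\<forall>v\<in>set vs. \<forall>Q1 Q2. RG i E sp vs F u1 v X = Some Q1 \<longrightarrow> RG i E sp vs F v u2 (X \<union> Q1) = Some Q2
          \<longrightarrow> F ((Q1 \<union> Q2) \<union> X) - F X \<le> F (P \<union> X) - F X)"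
proof -
  have IH: "\<forall>a b Y P. RG i E sp vs F a b Y = Some P \<longrightarrow> is_path E a b P"
    using RG_path[OF ac sps] by blast
  have hp: "has_path E u1 u2" and P: "P = fst (fold (rgstep i E sp vs F u1 u2 X) vs (sp u1 u2, F (sp u1 u2 \<union> X) - F X))"
    using R by (auto simp: RG_Suc' split: if_splits simp del: RG.simps)
  let ?P = "\<lambda>a. snd a = F (fst a \<union> X) - F X \<and> is_path E u1 u2 (fst a)"
  let ?Q = "\<lambda>v r. \<forall>Q1 Q2. RG i E sp vs F u1 v X = Some Q1 \<longrightarrow> RG i E sp vs F v u2 (X \<union> Q1) = Some Q2
          \<longrightarrow> F ((Q1 \<union> Q2) \<union> X) - F X \<le> r"
  have "?P (fold (rgstep i E sp vs F u1 u2 X) vs (sp u1 u2, F (sp u1 u2 \<union> X) - F X))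
    \<and> snd (sp u1 u2, F (sp u1 u2 \<union> X) - F X) \<le> snd (fold (rgstep i E sp vs F u1 u2 X) vs (sp u1 u2, F (sp u1 u2 \<union> X) - F X))
    \<and> (\<forall>v\<in>set vs. ?Q v (snd (fold (rgstep i E sp vs F u1 u2 X) vs (sp u1 u2, F (sp u1 u2 \<union> X) - F X))))"
    apply (rule fold_inv[where Q = ?Q])
    using rgstep_props(1)[OF IH ac] apply blast
    using rgstep_props(2)[OF IH ac] apply blast
    using rgstep_props(3)[OF IH ac] apply blast
     apply force
    using hp sps unfolding shortest_path_selector_def by auto
  then show ?thesis using P by auto
qed



lemma alg:
  fixes a b q c R oo j :: real
  assumes j: "1 \<le> j" and a: "0 \<le> a" and b: "0 \<le> b" and q: "a / j \<le> q" and c0: "0 \<le> c"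
    and cb: "b - q \<le> c" and R: "q + c / j \<le> R" and o: "oo \<le> a + b"
  shows "oo / (j + 1) \<le> R"
proof -
  have jp: "0 < j" using j by simp
  have "oo / (j + 1) \<le> (a + b) / (j + 1)" using o j by (simp add: divide_right_mono)
  also have "(a + b) / (j + 1) \<le> R"
  proof (cases "j * b \<le> a")
    case True
    have "(a + b) / (j + 1) \<le> a / j"
      using True jp by (simp add: field_simps)
    also have "a / j \<le> q" by (rule q)
    also have "q \<le> R" using R c0 jp by (smt (verit) divide_nonneg_pos)
    finally show ?thesis .
  next
    case False
    have "q + (b - q) / j \<le> R" using R cb jp by (smt (verit) divide_right_mono)
    moreover have "q + (b - q) / j = q * ((j - 1) / j) + b / j" using jp by (simp add: field_simps)
    moreover have "(a / j) * ((j - 1) / j) \<le> q * ((j - 1) / j)"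
      using q j by (intro mult_right_mono) auto
    moreover have "(a + b) / (j + 1) \<le> (a / j) * ((j - 1) / j) + b / j"
    proof -
      have "(a + b) * (j * j) \<le> (a * (j - 1) + b * j) * (j + 1)"
        using False by (simp add: algebra_simps)
      then show ?thesis using jp by (simp add: field_simps)
    qed
    ultimately show ?thesis by linarith
  qed
  finally show ?thesis .
qed

lemma approx:
  fixes F :: "'v edge set \<Rightarrow> real"
  assumes ac: "acyclic E" and sps: "shortest_path_selector E sp"
    and EV: "E \<subseteq> V \<times> V" and vsV: "V \<subseteq> set vs"
    and mono: "\<And>A B. A \<subseteq> B \<Longrightarrow> F A \<le> F B"
    and sub: "\<And>A B S. A \<subseteq> B \<Longrightarrow> F (B \<union> S) - F B \<le> F (A \<union> S) - F A"
  shows "j \<le> i \<Longrightarrow> is_path E u1 u2 Op \<Longrightarrow> card Op \<le> 2^j \<Longrightarrow>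
    \<exists>P. RG i E sp vs F u1 u2 X = Some P \<and> is_path E u1 u2 P \<and>
        (F (Op \<union> X) - F X) / (real j + 1) \<le> F (P \<union> X) - F X"
proof -
  have small: "\<exists>P. RG i E sp vs F u1 u2 X = Some P \<and> is_path E u1 u2 P \<and>
        (F (Op \<union> X) - F X) / (real j + 1) \<le> F (P \<union> X) - F X"
    if pO: "is_path E u1 u2 Op" and cO: "card Op \<le> 1" for i j u1 u2 X Op
  proof -
    have hp: "has_path E u1 u2" using pO by (auto simp: has_path_def)
    then obtain P where R: "RG i E sp vs F u1 u2 X = Some P" using RG_some[of E u1 u2 i sp vs F X] by blast
    have pP: "is_path E u1 u2 P" using RG_path[OF ac sps R] .
    have sp1: "is_path E u1 u2 (sp u1 u2)" and sp2: "card (sp u1 u2) \<le> card Op"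
      using sps hp pO unfolding shortest_path_selector_def by auto
    have spO: "sp u1 u2 = Op"
      using short_path_unique[OF sp1] short_path_unique[OF pO cO] sp2 cO by simp
    have ge: "F (Op \<union> X) - F X \<le> F (P \<union> X) - F X"
    proof (cases i)
      case 0 then show ?thesis using R spO hp by (auto split: if_splits)
    next
      case (Suc i') then show ?thesis using RG_best[OF ac sps] R spO by blast
    qed
    have nn: "0 \<le> F (Op \<union> X) - F X" using mono[of X "Op \<union> X"] by auto
    have "(F (Op \<union> X) - F X) / (real j + 1) \<le> F (Op \<union> X) - F X"
      using divide_left_mono[of 1 "real j + 1" "F (Op \<union> X) - F X"] nn by simp
    then show ?thesis using R pP ge by auto
  qed
  show "j \<le> i \<Longrightarrow> is_path E u1 u2 Op \<Longrightarrow> card Op \<le> 2^j \<Longrightarrow>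
    \<exists>P. RG i E sp vs F u1 u2 X = Some P \<and> is_path E u1 u2 P \<and>
        (F (Op \<union> X) - F X) / (real j + 1) \<le> F (P \<union> X) - F X"
  proof (induction i arbitrary: j u1 u2 X Op)
    case 0
    then show ?case using small[of u1 u2 Op 0 X j] by simp
  next
    case (Suc i)
    show ?case
    proof (cases "card Op \<le> 1")
      case True then show ?thesis using small Suc.prems by blast
    next
      case False
      obtain ps where vp: "is_vpath E u1 u2 ps" and Ops: "Op = vpath_edges ps"
        using Suc.prems(2) unfolding is_path_def by blast
      define n where "n = length ps"
      have dps: "distinct ps" using vp unfolding vpath_alt by simp
      have cn: "card Op = n - 1" using card_ve[OF dps] Ops n_def by simp
      have n2: "2 \<le> n - 1" using False cn by simp
      have "j \<noteq> 0" using n2 cn Suc.prems(3) by (cases j) auto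
      then obtain j' where jj: "j = Suc j'" by (cases j) auto
      have j'i: "j' \<le> i" using Suc.prems(1) jj by simp
      define K where "K = (2::nat)^j'"
      have nK: "n - 1 \<le> 2 * K" using Suc.prems(3) cn jj K_def by simp
      define m where "m = (n - 1) div 2"
      have mn: "Suc m < n" using n2 m_def by simp
      have mK: "m \<le> K" and m2K: "n - m - 1 \<le> K" using nK m_def by auto
      have spl: "is_vpath E u1 (ps!m) (take (Suc m) ps) \<and> is_vpath E (ps!m) u2 (drop m ps)
        \<and> vpath_edges ps = vpath_edges (take (Suc m) ps) \<union> vpath_edges (drop m ps)"
        using vpath_split[OF vp, of m] mn n_def by linarith
      define v where "v = ps ! m"
      define O1 where "O1 = vpath_edges (take (Suc m) ps)"
      define O2 where "O2 = vpath_edges (drop m ps)"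
      have pO1: "is_path E u1 v O1" using spl unfolding is_path_def O1_def v_def by blast
      have pO2: "is_path E v u2 O2" using spl unfolding is_path_def O2_def v_def by blast
      have OO: "Op = O1 \<union> O2" using spl Ops O1_def O2_def by simp
      have cO1: "card O1 \<le> 2^j'" using card_ve[of "take (Suc m) ps"] dps mK mn n_def K_def O1_def
        by simp
      have cO2: "card O2 \<le> 2^j'" using card_ve[of "drop m ps"] dps m2K mn n_def K_def O2_def
        by simp
      have "(ps ! m, ps ! Suc m) \<in> E" using vp mn n_def unfolding is_vpath_def by blast
      then have vV: "v \<in> set vs" using EV vsV v_def by auto
      obtain Q1 where R1: "RG i E sp vs F u1 v X = Some Q1" and pQ1: "is_path E u1 v Q1"
        and b1: "(F (O1 \<union> X) - F X) / (real j' + 1) \<le> F (Q1 \<union> X) - F X"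
        using Suc.IH[OF j'i pO1 cO1] by blast
      obtain Q2 where R2: "RG i E sp vs F v u2 (X \<union> Q1) = Some Q2"
        and b2: "(F (O2 \<union> (X \<union> Q1)) - F (X \<union> Q1)) / (real j' + 1) \<le> F (Q2 \<union> (X \<union> Q1)) - F (X \<union> Q1)"
        using Suc.IH[OF j'i pO2 cO2] by blast
      have hp: "has_path E u1 u2" using Suc.prems(2) by (auto simp: has_path_def)
      then obtain P where R: "RG (Suc i) E sp vs F u1 u2 X = Some P" using RG_some[of E u1 u2 "Suc i" sp vs F X] by blast
      have pP: "is_path E u1 u2 P" using RG_path[OF ac sps R] .
      have best: "F ((Q1 \<union> Q2) \<union> X) - F X \<le> F (P \<union> X) - F X"
        using RG_best[OF ac sps R] vV R1 R2 by blast
      have e1: "(Q1 \<union> Q2) \<union> X = Q2 \<union> (X \<union> Q1)" by blast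
      have e2: "X \<union> Q1 = Q1 \<union> X" by blast
      have e3: "O2 \<union> (X \<union> Q1) = (O2 \<union> X) \<union> Q1" by blast
      have e4: "Op \<union> X = (X \<union> O1) \<union> O2" using OO by blast
      have e5: "X \<union> O1 = O1 \<union> X" "X \<union> O2 = O2 \<union> X" by blast+
      have m1: "F (O2 \<union> X) \<le> F ((O2 \<union> X) \<union> Q1)" by (rule mono) blast
      have m2: "F (X \<union> Q1) \<le> F (O2 \<union> (X \<union> Q1))" by (rule mono) blast
      have m3: "F X \<le> F (O1 \<union> X)" "F X \<le> F (O2 \<union> X)" by (rule mono, blast)+
      have s1: "F ((X \<union> O1) \<union> O2) - F (X \<union> O1) \<le> F (X \<union> O2) - F X"
        by (rule sub) blast
      have jr: "real j = real j' + 1" using jj by simp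
      show ?thesis
      proof (intro exI conjI)
        show "RG (Suc i) E sp vs F u1 u2 X = Some P" by (rule R)
        show "is_path E u1 u2 P" by (rule pP)
        show "(F (Op \<union> X) - F X) / (real j + 1) \<le> F (P \<union> X) - F X"
          unfolding jr
        proof (rule alg[where a = "F (O1 \<union> X) - F X" and b = "F (O2 \<union> X) - F X"
              and q = "F (Q1 \<union> X) - F X" and c = "F (O2 \<union> (X \<union> Q1)) - F (X \<union> Q1)"])
          show "1 \<le> real j' + 1" by simp
          show "0 \<le> F (O1 \<union> X) - F X" "0 \<le> F (O2 \<union> X) - F X" using m3 by auto
          show "(F (O1 \<union> X) - F X) / (real j' + 1) \<le> F (Q1 \<union> X) - F X" by (rule b1)
          show "0 \<le> F (O2 \<union> (X \<union> Q1)) - F (X \<union> Q1)" using m2 by simp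
          show "F (O2 \<union> X) - F X - (F (Q1 \<union> X) - F X) \<le> F (O2 \<union> (X \<union> Q1)) - F (X \<union> Q1)"
            using m1 e2 e3 by simp
          show "F (Q1 \<union> X) - F X + (F (O2 \<union> (X \<union> Q1)) - F (X \<union> Q1)) / (real j' + 1) \<le> F (P \<union> X) - F X"
            using b2 best e1 e2 by simp
          show "F (Op \<union> X) - F X \<le> F (O1 \<union> X) - F X + (F (O2 \<union> X) - F X)"
            using s1 e4 e5 by simp
        qed
      qed
    qed
  qed
qed



definition capf :: "('v edge \<Rightarrow> real) \<Rightarrow> real \<Rightarrow> (nat \<Rightarrow> 'v edge set) \<Rightarrow> (nat \<Rightarrow> real) \<Rightarrow> nat \<Rightarrow> 'v edge set \<Rightarrow> real" where
  "capf C \<gamma> p lam i A = Min (insert (lam i) ((\<lambda>e. C e - \<gamma>) ` (p i \<inter> A)))"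

lemma capf_le_lam: "finite (p i) \<Longrightarrow> capf C \<gamma> p lam i A \<le> lam i"
  unfolding capf_def by (rule Min_le) auto

lemma capf_le_e: "finite (p i) \<Longrightarrow> e \<in> p i \<Longrightarrow> e \<in> A \<Longrightarrow> capf C \<gamma> p lam i A \<le> C e - \<gamma>"
  unfolding capf_def by (rule Min_le) auto

lemma capf_empty: "capf C \<gamma> p lam i {} = lam i"
  unfolding capf_def by simp

lemma capf_union: "finite (p i) \<Longrightarrow> capf C \<gamma> p lam i (A \<union> S) = min (capf C \<gamma> p lam i A) (capf C \<gamma> p lam i S)"
proof -
  assume f: "finite (p i)"
  have "insert (lam i) ((\<lambda>e. C e - \<gamma>) ` (p i \<inter> (A \<union> S))) =
     insert (lam i) ((\<lambda>e. C e - \<gamma>) ` (p i \<inter> A)) \<union> insert (lam i) ((\<lambda>e. C e - \<gamma>) ` (p i \<inter> S))" by blast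
  then show ?thesis unfolding capf_def using f by (simp only:) (rule Min_Un, auto)
qed

lemma capf_anti: "finite (p i) \<Longrightarrow> A \<subseteq> B \<Longrightarrow> capf C \<gamma> p lam i B \<le> capf C \<gamma> p lam i A"
  unfolding capf_def by (rule Min_antimono) auto

lemma T_opt_eq:
  assumes pE: "\<forall>i<k. p i \<subseteq> E" and fin: "\<forall>i<k. finite (p i)"
    and gle: "\<forall>e\<in>E. \<gamma> \<le> C e" and gnn: "0 \<le> \<gamma>"
    and lamnn: "\<forall>i<k. 0 \<le> lam i"
    and lamcap: "\<forall>e\<in>E. (\<Sum>i\<in>{i. i < k \<and> e \<in> p i}. lam i) \<le> C e"
    and disj: "\<forall>i<k. \<forall>j<k. i \<noteq> j \<longrightarrow> p i \<inter> p j = {}"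
  shows "T_opt E C \<gamma> k p lam A = (\<Sum>i<k. capf C \<gamma> p lam i A)"
proof -
  have single: "{j. j < k \<and> e \<in> p j} = {i}" if "i < k" "e \<in> p i" for e i
    using disj that by blast
  have lamC: "lam i \<le> C e" if "i < k" "e \<in> p i" for i e
    using lamcap single[OF that] pE that by force
  have nn: "0 \<le> capf C \<gamma> p lam i A" if "i < k" for i
  proof -
    have g: "\<forall>e\<in>p i. \<gamma> \<le> C e" using pE gle that by blast
    show ?thesis unfolding capf_def using fin that lamnn g by (subst Min_ge_iff) auto
  qed
  have feas: "feasible_tp E C \<gamma> k p lam A (\<lambda>i. capf C \<gamma> p lam i A)"
    unfolding feasible_tp_def
  proof (intro conjI ballI allI impI)
    fix e assume eE: "e \<in> E"
    show "(\<Sum>i\<in>{i. i < k \<and> e \<in> p i}. capf C \<gamma> p lam i A) \<le> C e - \<gamma> * (if e \<in> A then 1 else 0)"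
    proof (cases "\<exists>i<k. e \<in> p i")
      case True
      then obtain i where i: "i < k" "e \<in> p i" by blast
      have "capf C \<gamma> p lam i A \<le> C e - \<gamma> * (if e \<in> A then 1 else 0)"
      proof (cases "e \<in> A")
        case True then show ?thesis using capf_le_e[of p i e A C \<gamma> lam] fin i by simp
      next
        case False then show ?thesis using capf_le_lam[of p i C \<gamma> lam A] fin i lamC[OF i] by simp
      qed
      then show ?thesis using single[OF i] by simp
    next
      case False
      then have "{i. i < k \<and> e \<in> p i} = {}" by blast
      then have "(\<Sum>i\<in>{i. i < k \<and> e \<in> p i}. capf C \<gamma> p lam i A) = 0" by (simp only: sum.empty)
      then show ?thesis using gle eE gnn by auto
    qed
  next
    fix i assume "i < k"
    then show "0 \<le> capf C \<gamma> p lam i A" "capf C \<gamma> p lam i A \<le> lam i"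
      using nn capf_le_lam[of p i C \<gamma> lam A] fin by auto
  qed
  have upper: "(\<Sum>i<k. lt i) \<le> (\<Sum>i<k. capf C \<gamma> p lam i A)" if f: "feasible_tp E C \<gamma> k p lam A lt" for lt
  proof (rule sum_mono)
    fix i assume "i \<in> {..<k}"
    then have i: "i < k" by simp
    show "lt i \<le> capf C \<gamma> p lam i A"
      unfolding capf_def
    proof (subst Min_ge_iff)
      show "finite (insert (lam i) ((\<lambda>e. C e - \<gamma>) ` (p i \<inter> A)))" using fin i by simp
      show "insert (lam i) ((\<lambda>e. C e - \<gamma>) ` (p i \<inter> A)) \<noteq> {}" by simp
      show "\<forall>a\<in>insert (lam i) ((\<lambda>e. C e - \<gamma>) ` (p i \<inter> A)). lt i \<le> a"
      proof
        fix x assume "x \<in> insert (lam i) ((\<lambda>e. C e - \<gamma>) ` (p i \<inter> A))"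
        then consider "x = lam i" | e where "e \<in> p i" "e \<in> A" "x = C e - \<gamma>" by blast
        then show "lt i \<le> x"
        proof cases
          case 1 then show ?thesis using f i unfolding feasible_tp_def by simp
        next
          case 2
          have "e \<in> E" using pE i 2 by blast
          then have "(\<Sum>i\<in>{i. i < k \<and> e \<in> p i}. lt i) \<le> C e - \<gamma> * (if e \<in> A then 1 else 0)"
            using f unfolding feasible_tp_def by blast
          then show ?thesis using single[OF i 2(1)] 2 by simp
        qed
      qed
    qed
  qed
  show ?thesis unfolding T_opt_def
    by (rule cSup_eq_maximum) (use feas upper in auto)
qed



theorem theorem1:
  fixes V :: "'v set" and E :: "'v edge set" and C :: "'v edge \<Rightarrow> real" and \<gamma> :: real
    and s t :: 'v and k :: nat and p :: "nat \<Rightarrow> 'v edge set" and lam :: "nat \<Rightarrow> real"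
    and sp :: "'v \<Rightarrow> 'v \<Rightarrow> 'v edge set" and vs :: "'v list"
    and Estar :: "'v edge set" and I :: nat
  assumes finV: "finite V" and EV: "E \<subseteq> V \<times> V" and noloop: "\<forall>x. (x, x) \<notin> E"
    and dag: "acyclic E"
    and Cnn: "\<forall>e\<in>E. 0 \<le> C e"
    and sV: "s \<in> V" and tV: "t \<in> V" and st: "has_path E s t"
    and gpos: "0 < \<gamma>" and gle: "\<forall>e\<in>E. \<gamma> \<le> C e"
    and ppath: "\<forall>i<k. is_dpath E (p i)"
    and lamnn: "\<forall>i<k. 0 \<le> lam i"
    and lamcap: "\<forall>e\<in>E. (\<Sum>i\<in>{i. i < k \<and> e \<in> p i}. lam i) \<le> C e"
    and disj: "\<forall>i<k. \<forall>j<k. i \<noteq> j \<longrightarrow> p i \<inter> p j = {}"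
    and spsel: "shortest_path_selector E sp"
    and vsV: "set vs = V" and vsd: "distinct vs"
    and Estar_path: "is_path E s t Estar"
    and Estar_max: "\<forall>S. is_path E s t S \<longrightarrow> Lambda E C \<gamma> k p lam S \<le> Lambda E C \<gamma> k p lam Estar"
    and Ibig: "int I \<ge> \<lceil>log 2 (real (card Estar))\<rceil>"
  shows "\<exists>Ef. RG I E sp vs (Lambda E C \<gamma> k p lam) s t {} = Some Ef \<and> is_path E s t Ef \<and>
           Lambda E C \<gamma> k p lam Ef \<ge>
             Lambda E C \<gamma> k p lam Estar / (real_of_int \<lceil>log 2 (real (card Estar))\<rceil> + 1)"
proof -
  define F where "F = Lambda E C \<gamma> k p lam"
  have pE: "\<forall>i<k. p i \<subseteq> E" and fin: "\<forall>i<k. finite (p i)"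
    using ppath unfolding is_dpath_def is_path_def vpath_alt by (auto simp: ve_finite)
  have Feq: "F A = (\<Sum>i<k. lam i - capf C \<gamma> p lam i A)" for A
    unfolding F_def Lambda_def
    using T_opt_eq[OF pE fin gle _ lamnn lamcap disj, of A] gpos by (simp add: sum_subtractf)
  have mono: "F A \<le> F B" if "A \<subseteq> B" for A B
    unfolding Feq by (rule sum_mono) (use capf_anti[of p _ A B C \<gamma> lam] fin that in auto)
  have sub: "F (B \<union> S) - F B \<le> F (A \<union> S) - F A" if "A \<subseteq> B" for A B S
  proof -
    have "F (B \<union> S) - F B = (\<Sum>i<k. capf C \<gamma> p lam i B - capf C \<gamma> p lam i (B \<union> S))"
      unfolding Feq by (simp add: sum_subtractf[symmetric])
    also have "\<dots> \<le> (\<Sum>i<k. capf C \<gamma> p lam i A - capf C \<gamma> p lam i (A \<union> S))"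
    proof (rule sum_mono)
      fix i assume "i \<in> {..<k}"
      then have fi: "finite (p i)" using fin by simp
      have "capf C \<gamma> p lam i B \<le> capf C \<gamma> p lam i A" using capf_anti[of p i A B C \<gamma> lam] fi that by blast
      then show "capf C \<gamma> p lam i B - capf C \<gamma> p lam i (B \<union> S) \<le> capf C \<gamma> p lam i A - capf C \<gamma> p lam i (A \<union> S)"
        using capf_union[of p i C \<gamma> lam A S] capf_union[of p i C \<gamma> lam B S] fi by simp
    qed
    also have "\<dots> = F (A \<union> S) - F A"
      unfolding Feq by (simp add: sum_subtractf[symmetric])
    finally show ?thesis .
  qed
  have F0: "F {} = 0" unfolding Feq by (simp add: capf_empty)
  have Vvs: "V \<subseteq> set vs" using vsV by simp
  define d where "d = card Estar"
  obtain ps where psE: "is_vpath E s t ps" "Estar = vpath_edges ps"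
    using Estar_path unfolding is_path_def by blast
  have finE: "finite Estar" using psE(2) ve_finite by simp
  show ?thesis
  proof (cases "d = 0")
    case True
    then have Ee: "Estar = {}" using finE d_def by simp
    obtain P where R: "RG I E sp vs F s t {} = Some P" and pP: "is_path E s t P"
      using approx[OF dag spsel EV Vvs mono sub, of 0 I s t Estar "{}"] Estar_path True d_def by auto
    have "0 \<le> F P" using mono[of "{}" P] F0 by simp
    then show ?thesis using R pP Ee F0 unfolding F_def by auto
  next
    case False
    then have d1: "1 \<le> real d" by simp
    define j where "j = nat \<lceil>log 2 (real d)\<rceil>"
    have lg0: "0 \<le> log 2 (real d)" using d1 by simp
    have jr: "real_of_int \<lceil>log 2 (real d)\<rceil> = real j" unfolding j_def using lg0 by simp
    have jI: "j \<le> I" using Ibig nat_le_iff unfolding j_def d_def by blast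
    have "real d = 2 powr (log 2 (real d))" using d1 by simp
    also have "\<dots> \<le> 2 powr (real j)"
      using jr by (intro powr_mono) (auto, linarith)
    also have "\<dots> = real (2 ^ j)" by (simp add: powr_realpow)
    finally have dj: "d \<le> 2 ^ j" by linarith
    obtain P where R: "RG I E sp vs F s t {} = Some P" and pP: "is_path E s t P"
      and b: "(F (Estar \<union> {}) - F {}) / (real j + 1) \<le> F (P \<union> {}) - F {}"
      using approx[OF dag spsel EV Vvs mono sub, of j I s t Estar "{}"] Estar_path jI dj d_def by auto
    show ?thesis using R pP b F0 jr unfolding F_def d_def by auto
  qed
qed

end
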